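(* Let $E$ be a connected graded Frobenius algebra with top degree $l$, $\mathfrak e$ a basis of $E_l$, $\{a_1,\dots,a_n\}$ a basis of $E_1$, $\{b_i\}$ the basis of $E_{l-1}$ with $a_ib_j=\delta_{ij}\mathfrak e$, $\{c_i\}$ the basis of $E_1$ with $b_ic_j=\delta_{ij}\mathfrak e$, and $\alpha=(\alpha_{ij})$ the invertible matrix with $c_i=\sum_j\alpha_{ij}a_j$. Let $K$ be a Hopf algebra with antipode $S$ such that $E$ is a left $K$-comodule algebra via a grading-preserving coaction $\rho$, and write $\rho(a_i)=\sum_s y_{is}\otimes a_s$, $\rho(b_i)=\sum_s f_{is}\otimes b_s$, $\rho(c_i)=\sum_s g_{is}\otimes c_s$, $\rho(\mathfrak e)={\sf D}\otimes\mathfrak e$. Let $\mathbb Y=(y_{ij})$, $\mathbb F=(f_{ij})$, $\mathbb G=(g_{ij})$, and $\mathbb I$ the $n\times n$ identity matrix. Then: (a) $\mathbb YS(\mathbb Y)=\mathbb I=S(\mathbb Y)\mathbb Y$; (b) $\mathbb GS(\mathbb G)=\mathbb I=S(\mathbb G)\mathbb G$; (c) $\mathbb Y\mathbb F^\tau={\sf D}\mathbb I$, and consequently $S(\mathbb Y)=\mathbb F^\tau({\sf D}^{-1}\mathbb I)$; (d) $S(\mathbb F)S(\mathbb Y^\tau)={\sf D}^{-1}\mathbb I$; (e) $S(\mathbb G)S(\mathbb F^\tau)={\sf D}^{-1}\mathbb I$, and consequently $S(\mathbb F^\tau)\,{\sf D}\mathbb I=\mathbb G$; (f) $S^2(\mathbb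 Y)={\sf D}\mathbb I\cdot\mathbb G\cdot{\sf D}^{-1}\mathbb I$; (g) $\mathbb G=\alpha\mathbb Y\alpha^{-1}$.
   Context: A connected graded algebra $E$ is Frobenius if finite dimensional with a nondegenerate associative bilinear form of some degree; then the top nonzero degree $E_l$ is one-dimensional and multiplication gives nondegenerate pairings $E_i\times E_{l-i}\to E_l$, so the bases $\{b_i\},\{c_i\}$ exist uniquely. The element ${\sf D}$ (the homological codeterminant of the coaction) is grouplike, hence invertible with $S({\sf D})={\sf D}^{-1}$. Matrices have entries in $K$, are multiplied by $(XY)_{ij}=\sum_sX_{is}Y_{sj}$, $S(X)$ means applying $S$ entrywise, $X^\tau$ is the transpose, and ${\sf D}\mathbb I$ is the diagonal matrix with entries ${\sf D}$. *)

theory Defs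
  imports Complex_Main
begin

definition algebra_over :: "('f::field \<Rightarrow> 'a::ring_1 \<Rightarrow> 'a) \<Rightarrow> bool" where
  "algebra_over sc \<longleftrightarrow> Vector_Spaces.vector_space sc \<and>
     (\<forall>c x y. sc c (x * y) = sc c x * y \<and> sc c (x * y) = x * sc c y)"

text \<open>An element of V (x) W is represented by a list of pairs, meaning the sum of the
  corresponding pure tensors. Two representatives denote the same element of the
  tensor product over the field iff all products of linear functionals agree on them
  (linear functionals separate points of a tensor product of vector spaces).\<close>

definition tens_eq2 ::
  "('f::field \<Rightarrow> 'a \<Rightarrow> 'a::ab_group_add) \<Rightarrow> ('f \<Rightarrow> 'b \<Rightarrow> 'b::ab_group_add)
   \<Rightarrow> ('a \<times> 'b) list \<Rightarrow> ('a \<times> 'b) list \<Rightarrow> bool" where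
  "tens_eq2 s1 s2 L M \<longleftrightarrow>
     (\<forall>\<phi> \<psi>. Vector_Spaces.linear s1 (*) \<phi> \<and> Vector_Spaces.linear s2 (*) \<psi> \<longrightarrow>
        (\<Sum>(x,y)\<leftarrow>L. \<phi> x * \<psi> y) = (\<Sum>(x,y)\<leftarrow>M. \<phi> x * \<psi> y))"

definition tens_eq3 ::
  "('f::field \<Rightarrow> 'a \<Rightarrow> 'a::ab_group_add) \<Rightarrow> ('f \<Rightarrow> 'b \<Rightarrow> 'b::ab_group_add)
   \<Rightarrow> ('f \<Rightarrow> 'c \<Rightarrow> 'c::ab_group_add)
   \<Rightarrow> ('a \<times> 'b \<times> 'c) list \<Rightarrow> ('a \<times> 'b \<times> 'c) list \<Rightarrow> bool" where
  "tens_eq3 s1 s2 s3 L M \<longleftrightarrow>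
     (\<forall>\<phi> \<psi> \<chi>. Vector_Spaces.linear s1 (*) \<phi> \<and> Vector_Spaces.linear s2 (*) \<psi> \<and> Vector_Spaces.linear s3 (*) \<chi> \<longrightarrow>
        (\<Sum>(x,y,z)\<leftarrow>L. \<phi> x * \<psi> y * \<chi> z) = (\<Sum>(x,y,z)\<leftarrow>M. \<phi> x * \<psi> y * \<chi> z))"

definition tens_mult :: "('a::times \<times> 'b::times) list \<Rightarrow> ('a \<times> 'b) list \<Rightarrow> ('a \<times> 'b) list" where
  "tens_mult L M = concat (map (\<lambda>(a,b). map (\<lambda>(c,d). (a * c, b * d)) M) L)"

definition tens_left :: "('a \<Rightarrow> ('b \<times> 'c) list) \<Rightarrow> ('a \<times> 'd) list \<Rightarrow> ('b \<times> 'c \<times> 'd) list" where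
  "tens_left f L = concat (map (\<lambda>(a,d). map (\<lambda>(b,c). (b,c,d)) (f a)) L)"

definition tens_right :: "('d \<Rightarrow> ('b \<times> 'c) list) \<Rightarrow> ('a \<times> 'd) list \<Rightarrow> ('a \<times> 'b \<times> 'c) list" where
  "tens_right g L = concat (map (\<lambda>(a,d). map (\<lambda>(b,c). (a,b,c)) (g d)) L)"

definition hopf_algebra ::
  "('f::field \<Rightarrow> 'k::ring_1 \<Rightarrow> 'k) \<Rightarrow> ('k \<Rightarrow> ('k \<times> 'k) list) \<Rightarrow> ('k \<Rightarrow> 'f) \<Rightarrow> ('k \<Rightarrow> 'k) \<Rightarrow> bool"
where
  "hopf_algebra sK \<Delta> \<epsilon> S \<longleftrightarrow>
     algebra_over sK \<and>
     \<comment> \<open>Delta is linear\<close>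
     (\<forall>x y. tens_eq2 sK sK (\<Delta> (x + y)) (\<Delta> x @ \<Delta> y)) \<and>
     (\<forall>c x. tens_eq2 sK sK (\<Delta> (sK c x)) (map (\<lambda>(a,b). (sK c a, b)) (\<Delta> x))) \<and>
     \<comment> \<open>coassociativity\<close>
     (\<forall>x. tens_eq3 sK sK sK (tens_left \<Delta> (\<Delta> x)) (tens_right \<Delta> (\<Delta> x))) \<and>
     \<comment> \<open>counit\<close>
     Vector_Spaces.linear sK (*) \<epsilon> \<and>
     (\<forall>x. (\<Sum>(a,b)\<leftarrow>\<Delta> x. sK (\<epsilon> a) b) = x) \<and>
     (\<forall>x. (\<Sum>(a,b)\<leftarrow>\<Delta> x. sK (\<epsilon> b) a) = x) \<and>
     \<comment> \<open>Delta and eps are algebra maps\<close>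
     (\<forall>x y. tens_eq2 sK sK (\<Delta> (x * y)) (tens_mult (\<Delta> x) (\<Delta> y))) \<and>
     tens_eq2 sK sK (\<Delta> 1) [(1, 1)] \<and>
     (\<forall>x y. \<epsilon> (x * y) = \<epsilon> x * \<epsilon> y) \<and> \<epsilon> 1 = 1 \<and>
     \<comment> \<open>antipode\<close>
     Vector_Spaces.linear sK sK S \<and>
     (\<forall>x. (\<Sum>(a,b)\<leftarrow>\<Delta> x. S a * b) = sK (\<epsilon> x) 1) \<and>
     (\<forall>x. (\<Sum>(a,b)\<leftarrow>\<Delta> x. a * S b) = sK (\<epsilon> x) 1)"

definition graded_algebra :: "('f::field \<Rightarrow> 'e::ring_1 \<Rightarrow> 'e) \<Rightarrow> (nat \<Rightarrow> 'e set) \<Rightarrow> bool" where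
  "graded_algebra sE Egr \<longleftrightarrow> algebra_over sE \<and>
     (\<forall>i. module.subspace sE (Egr i)) \<and>
     (\<forall>i j x y. x \<in> Egr i \<and> y \<in> Egr j \<longrightarrow> x * y \<in> Egr (i + j)) \<and>
     1 \<in> Egr 0 \<and>
     (\<forall>x. \<exists>!h. (\<forall>i. h i \<in> Egr i) \<and> finite {i. h i \<noteq> 0} \<and> x = (\<Sum>i\<in>{i. h i \<noteq> 0}. h i))"

definition connected_graded_algebra :: "('f::field \<Rightarrow> 'e::ring_1 \<Rightarrow> 'e) \<Rightarrow> (nat \<Rightarrow> 'e set) \<Rightarrow> bool" where
  "connected_graded_algebra sE Egr \<longleftrightarrow> graded_algebra sE Egr \<and> Egr 0 = range (\<lambda>c. sE c 1)"

definition graded_frobenius :: "('f::field \<Rightarrow> 'e::ring_1 \<Rightarrow> 'e) \<Rightarrow> (nat \<Rightarrow> 'e set) \<Rightarrow> bool" where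
  "graded_frobenius sE Egr \<longleftrightarrow>
     (\<exists>B. finite B \<and> module.span sE B = UNIV) \<and>
     (\<exists>(form :: 'e \<Rightarrow> 'e \<Rightarrow> 'f) d.
        (\<forall>y. Vector_Spaces.linear sE (*) (\<lambda>x. form x y)) \<and> (\<forall>x. Vector_Spaces.linear sE (*) (\<lambda>y. form x y)) \<and>
        (\<forall>x y z. form (x * y) z = form x (y * z)) \<and>
        (\<forall>x. (\<forall>y. form x y = 0) \<longrightarrow> x = 0) \<and>
        (\<forall>y. (\<forall>x. form x y = 0) \<longrightarrow> y = 0) \<and>
        (\<forall>i j x y. x \<in> Egr i \<and> y \<in> Egr j \<and> i + j \<noteq> d \<longrightarrow> form x y = 0))"

definition top_degree :: "(nat \<Rightarrow> 'e::zero set) \<Rightarrow> nat \<Rightarrow> bool" where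
  "top_degree Egr l \<longleftrightarrow> Egr l \<noteq> {0} \<and> (\<forall>i>l. Egr i = {0})"

definition is_basis_of :: "('f::field \<Rightarrow> 'e::ab_group_add \<Rightarrow> 'e) \<Rightarrow> 'e set \<Rightarrow> (nat \<Rightarrow> 'e) \<Rightarrow> nat \<Rightarrow> bool" where
  "is_basis_of sE V v n \<longleftrightarrow> (\<forall>i<n. v i \<in> V) \<and> inj_on v {..<n} \<and>
     module.independent sE (v ` {..<n}) \<and> module.span sE (v ` {..<n}) = V"

definition graded_comodule_algebra ::
  "('f::field \<Rightarrow> 'k::ring_1 \<Rightarrow> 'k) \<Rightarrow> ('k \<Rightarrow> ('k \<times> 'k) list) \<Rightarrow> ('k \<Rightarrow> 'f)
   \<Rightarrow> ('f \<Rightarrow> 'e::ring_1 \<Rightarrow> 'e) \<Rightarrow> (nat \<Rightarrow> 'e set) \<Rightarrow> ('e \<Rightarrow> ('k \<times> 'e) list) \<Rightarrow> bool"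
where
  "graded_comodule_algebra sK \<Delta> \<epsilon> sE Egr \<rho> \<longleftrightarrow>
     (\<forall>x y. tens_eq2 sK sE (\<rho> (x + y)) (\<rho> x @ \<rho> y)) \<and>
     (\<forall>c x. tens_eq2 sK sE (\<rho> (sE c x)) (map (\<lambda>(a,b). (a, sE c b)) (\<rho> x))) \<and>
     (\<forall>x. tens_eq3 sK sK sE (tens_left \<Delta> (\<rho> x)) (tens_right \<rho> (\<rho> x))) \<and>
     (\<forall>x. (\<Sum>(a,b)\<leftarrow>\<rho> x. sE (\<epsilon> a) b) = x) \<and>
     (\<forall>x y. tens_eq2 sK sE (\<rho> (x * y)) (tens_mult (\<rho> x) (\<rho> y))) \<and>
     tens_eq2 sK sE (\<rho> 1) [(1, 1)] \<and>
     (\<forall>i x. x \<in> Egr i \<longrightarrow> (\<exists>L. tens_eq2 sK sE (\<rho> x) L \<and> (\<forall>(a,b)\<in>set L. b \<in> Egr i)))"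

definition mat_eq :: "nat \<Rightarrow> (nat \<Rightarrow> nat \<Rightarrow> 'a) \<Rightarrow> (nat \<Rightarrow> nat \<Rightarrow> 'a) \<Rightarrow> bool" where
  "mat_eq n X Y \<longleftrightarrow> (\<forall>i<n. \<forall>j<n. X i j = Y i j)"

definition mat_mult :: "nat \<Rightarrow> (nat \<Rightarrow> nat \<Rightarrow> 'a::semiring_0) \<Rightarrow> (nat \<Rightarrow> nat \<Rightarrow> 'a) \<Rightarrow> nat \<Rightarrow> nat \<Rightarrow> 'a" where
  "mat_mult n X Y = (\<lambda>i j. \<Sum>s<n. X i s * Y s j)"

definition smat_mult_left :: "('f \<Rightarrow> 'a \<Rightarrow> 'a::comm_monoid_add) \<Rightarrow> nat \<Rightarrow> (nat \<Rightarrow> nat \<Rightarrow> 'f) \<Rightarrow> (nat \<Rightarrow> nat \<Rightarrow> 'a) \<Rightarrow> nat \<Rightarrow> nat \<Rightarrow> 'a" where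
  "smat_mult_left sc n A X = (\<lambda>i j. \<Sum>s<n. sc (A i s) (X s j))"

definition smat_mult_right :: "('f \<Rightarrow> 'a \<Rightarrow> 'a::comm_monoid_add) \<Rightarrow> nat \<Rightarrow> (nat \<Rightarrow> nat \<Rightarrow> 'a) \<Rightarrow> (nat \<Rightarrow> nat \<Rightarrow> 'f) \<Rightarrow> nat \<Rightarrow> nat \<Rightarrow> 'a" where
  "smat_mult_right sc n X A = (\<lambda>i j. \<Sum>s<n. sc (A s j) (X i s))"

definition mat_map :: "('a \<Rightarrow> 'b) \<Rightarrow> (nat \<Rightarrow> nat \<Rightarrow> 'a) \<Rightarrow> nat \<Rightarrow> nat \<Rightarrow> 'b" where
  "mat_map f X = (\<lambda>i j. f (X i j))"

definition mat_transpose :: "(nat \<Rightarrow> nat \<Rightarrow> 'a) \<Rightarrow> nat \<Rightarrow> nat \<Rightarrow> 'a" where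
  "mat_transpose X = (\<lambda>i j. X j i)"

definition diag_mat :: "'a::zero \<Rightarrow> nat \<Rightarrow> nat \<Rightarrow> 'a" where
  "diag_mat d = (\<lambda>i j. if i = j then d else 0)"

end

theory Submission
  imports Defs
begin

lemma vs_field: "vector_space ((*) :: 'f::field \<Rightarrow> 'f \<Rightarrow> 'f)"
  by unfold_locales (auto simp: algebra_simps)

lemma vsp: "vector_space s \<Longrightarrow> vector_space_pair s ((*) :: 'f::field \<Rightarrow> 'f \<Rightarrow> 'f)"
  using vs_field unfolding vector_space_pair_def by blast

lemma lin_f: fixes \<phi> :: "'a::ab_group_add \<Rightarrow> 'f::field" shows "Vector_Spaces.linear s (*) \<phi> \<longleftrightarrow> vector_space s \<and> (\<forall>x y. \<phi> (x + y) = \<phi> x + \<phi> y) \<and> (\<forall>c x. \<phi> (s c x) = c * \<phi> x)"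
  using vs_field[where 'f='f] unfolding Vector_Spaces.linear_iff by auto

lemma sep:
  fixes s :: "'f::field \<Rightarrow> 'a::ab_group_add \<Rightarrow> 'a"
  assumes vs: "vector_space s" and h: "\<And>\<phi>. Vector_Spaces.linear s (*) \<phi> \<Longrightarrow> \<phi> x = \<phi> y"
  shows "x = y"
proof (rule ccontr)
  assume ne: "x \<noteq> y"
  interpret p: vector_space_pair s "(*) :: 'f \<Rightarrow> 'f \<Rightarrow> 'f" using vsp[OF vs] .
  have "p.vs1.independent {x - y}" using ne by simp
  from p.linear_independent_extend[OF this, of "\<lambda>_. 1"] obtain g where
    g: "Vector_Spaces.linear s (*) g" "g (x - y) = 1" by auto
  have "g (x - y) = g x - g y" using g(1) by (rule p.linear_diff)
  with h[OF g(1)] g(2) show False by simp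
qed

lemma coord:
  fixes s :: "'f::field \<Rightarrow> 'a::ab_group_add \<Rightarrow> 'a"
  assumes vs: "vector_space s" and ind: "module.independent s (v ` {..<n})" and inj: "inj_on v {..<n}"
    and j: "j < n"
  shows "\<exists>\<chi>. Vector_Spaces.linear s (*) \<chi> \<and> (\<forall>t<n. \<chi> (v t) = (if t = j then 1 else 0))"
proof -
  interpret p: vector_space_pair s "(*) :: 'f \<Rightarrow> 'f \<Rightarrow> 'f" using vsp[OF vs] .
  from p.linear_independent_extend[OF ind, of "\<lambda>w. if w = v j then 1 else 0"] obtain g where
    g: "Vector_Spaces.linear s (*) g" "\<forall>x\<in>v ` {..<n}. g x = (if x = v j then 1 else 0)" by blast
  show ?thesis
  proof (intro exI conjI allI impI)
    fix t assume t: "t < n"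
    show "g (v t) = (if t = j then 1 else 0)"
      using g(2) t j inj by (auto simp: inj_on_def)
  qed (rule g(1))
qed

lemma sum_list_sum_swap:
  "sum_list (map (\<lambda>x. sum (g x) B) xs) = sum (\<lambda>u. sum_list (map (\<lambda>x. g x u) xs)) B"
  by (induction xs) (auto simp: sum.distrib)

lemma bil:
  fixes s1 :: "'f::field \<Rightarrow> 'a::ab_group_add \<Rightarrow> 'a" and s2 :: "'f \<Rightarrow> 'b::ab_group_add \<Rightarrow> 'b"
    and \<beta> :: "'a \<Rightarrow> 'b \<Rightarrow> 'f"
  assumes vs1: "vector_space s1" and vs2: "vector_space s2" and eq: "tens_eq2 s1 s2 L M"
    and l1: "\<And>b. Vector_Spaces.linear s1 (*) (\<lambda>a. \<beta> a b)"
    and l2: "\<And>a. Vector_Spaces.linear s2 (*) (\<beta> a)"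
  shows "(\<Sum>(a,b)\<leftarrow>L. \<beta> a b) = (\<Sum>(a,b)\<leftarrow>M. \<beta> a b)"
proof -
  interpret p: vector_space_pair s1 "(*) :: 'f \<Rightarrow> 'f \<Rightarrow> 'f" using vsp[OF vs1] .
  interpret q: vector_space_pair s1 s1 using vs1 unfolding vector_space_pair_def by blast
  define A where "A = fst ` set (L @ M)"
  have fA: "finite A" unfolding A_def by simp
  obtain B where B: "B \<subseteq> A" "p.vs1.independent B" "A \<subseteq> p.vs1.span B"
    using p.vs1.maximal_independent_subset[of A] by blast
  have fB: "finite B" using B(1) fA finite_subset by blast
  define \<phi> where "\<phi> u = p.construct B (\<lambda>w. if w = u then (1::'f) else 0)" for u
  have lin: "Vector_Spaces.linear s1 (*) (\<phi> u)" for u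
    unfolding \<phi>_def by (rule p.linear_construct[OF B(2)])
  have phiB: "\<phi> u w = (if w = u then 1 else 0)" if "w \<in> B" for u w
    unfolding \<phi>_def using p.construct_basis[OF B(2) that] by simp
  define g where "g a = (\<Sum>u\<in>B. s1 (\<phi> u a) u)" for a
  have lg: "Vector_Spaces.linear s1 s1 g"
    unfolding Vector_Spaces.linear_iff
  proof (intro conjI allI vs1)
    fix x y show "g (x + y) = g x + g y"
      unfolding g_def using p.linear_add[OF lin]
      by (simp add: p.vs1.scale_left_distrib sum.distrib)
  next
    fix c x show "g (s1 c x) = s1 c (g x)"
      unfolding g_def using p.linear_scale[OF lin]
      by (simp add: p.vs1.scale_sum_right)
  qed
  have lid: "Vector_Spaces.linear s1 s1 id"
    unfolding Vector_Spaces.linear_iff using vs1 by simp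
  have rep: "a = g a" if "a \<in> p.vs1.span B" for a
  proof -
    have "id a = g a"
    proof (rule q.linear_eq_on[OF lid lg that])
      fix w assume w: "w \<in> B"
      have "g w = (\<Sum>u\<in>B. s1 (if w = u then 1 else 0) u)"
        unfolding g_def using phiB[OF w] by simp
      also have "\<dots> = (\<Sum>u\<in>B. if w = u then u else 0)"
        by (rule sum.cong) auto
      also have "\<dots> = w" using fB w by (simp add: sum.delta)
      finally show "id w = g w" by simp
    qed
    then show ?thesis by simp
  qed
  have bexp: "\<beta> a b = (\<Sum>u\<in>B. \<phi> u a * \<beta> u b)" if "a \<in> A" for a b
  proof -
    have "\<beta> a b = \<beta> (g a) b" using rep that B(3) by auto
    also have "\<dots> = (\<Sum>u\<in>B. \<beta> (s1 (\<phi> u a) u) b)"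
      unfolding g_def using p.linear_sum[OF l1] by simp
    also have "\<dots> = (\<Sum>u\<in>B. \<phi> u a * \<beta> u b)"
      using p.linear_scale[OF l1] by simp
    finally show ?thesis .
  qed
  have key: "(\<Sum>(a,b)\<leftarrow>N. \<beta> a b) = (\<Sum>u\<in>B. (\<Sum>(a,b)\<leftarrow>N. \<phi> u a * \<beta> u b))"
    if "fst ` set N \<subseteq> A" for N
  proof -
    have "(\<Sum>(a,b)\<leftarrow>N. \<beta> a b) = sum_list (map (\<lambda>x. sum (\<lambda>u. case x of (a,b) \<Rightarrow> \<phi> u a * \<beta> u b) B) N)"
      by (rule arg_cong[where f=sum_list], rule map_cong, simp)
         (use that bexp in \<open>auto simp: split_def\<close>)
    also have "\<dots> = (\<Sum>u\<in>B. (\<Sum>(a,b)\<leftarrow>N. \<phi> u a * \<beta> u b))"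
      by (subst sum_list_sum_swap) (simp add: split_def)
    finally show ?thesis .
  qed
  have "(\<Sum>(a,b)\<leftarrow>L. \<beta> a b) = (\<Sum>u\<in>B. (\<Sum>(a,b)\<leftarrow>L. \<phi> u a * \<beta> u b))"
    by (rule key) (auto simp: A_def)
  also have "\<dots> = (\<Sum>u\<in>B. (\<Sum>(a,b)\<leftarrow>M. \<phi> u a * \<beta> u b))"
    using eq lin l2 unfolding tens_eq2_def by auto
  also have "\<dots> = (\<Sum>(a,b)\<leftarrow>M. \<beta> a b)"
    by (rule key[symmetric]) (auto simp: A_def)
  finally show ?thesis .
qed


lemma lin_sum_list:
  assumes "Vector_Spaces.linear s1 s2 f"
  shows "f (sum_list (map g xs)) = sum_list (map (f \<circ> g) xs)"
proof -
  interpret Vector_Spaces.linear s1 s2 f by fact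
  show ?thesis by (induction xs) (simp_all add: add zero)
qed

lemma bilv:
  fixes s1 :: "'f::field \<Rightarrow> 'a::ab_group_add \<Rightarrow> 'a" and s2 :: "'f \<Rightarrow> 'b::ab_group_add \<Rightarrow> 'b"
    and s3 :: "'f \<Rightarrow> 'c::ab_group_add \<Rightarrow> 'c" and \<beta> :: "'a \<Rightarrow> 'b \<Rightarrow> 'c"
  assumes vs1: "vector_space s1" and vs2: "vector_space s2" and vs3: "vector_space s3"
    and eq: "tens_eq2 s1 s2 L M"
    and l1: "\<And>b. Vector_Spaces.linear s1 s3 (\<lambda>a. \<beta> a b)"
    and l2: "\<And>a. Vector_Spaces.linear s2 s3 (\<beta> a)"
  shows "(\<Sum>(a,b)\<leftarrow>L. \<beta> a b) = (\<Sum>(a,b)\<leftarrow>M. \<beta> a b)"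
proof (rule sep[OF vs3])
  fix lam :: "'c \<Rightarrow> 'f" assume lam: "Vector_Spaces.linear s3 (*) lam"
  have c1: "Vector_Spaces.linear s1 (*) (\<lambda>a. lam (\<beta> a b))" for b
    using Vector_Spaces.linear_compose[OF l1 lam] by (simp add: comp_def)
  have c2: "Vector_Spaces.linear s2 (*) (\<lambda>b. lam (\<beta> a b))" for a
    using Vector_Spaces.linear_compose[OF l2 lam] by (simp add: comp_def)
  have "lam (\<Sum>(a,b)\<leftarrow>L. \<beta> a b) = (\<Sum>(a,b)\<leftarrow>L. lam (\<beta> a b))"
    using lin_sum_list[OF lam] by (simp add: comp_def split_def)
  also have "\<dots> = (\<Sum>(a,b)\<leftarrow>M. lam (\<beta> a b))"
    by (rule bil[OF vs1 vs2 eq c1 c2])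
  also have "\<dots> = lam (\<Sum>(a,b)\<leftarrow>M. \<beta> a b)"
    by (subst lin_sum_list[OF lam]) (simp add: comp_def split_def)
  finally show "lam (\<Sum>(a,b)\<leftarrow>L. \<beta> a b) = lam (\<Sum>(a,b)\<leftarrow>M. \<beta> a b)" .
qed

lemma sum_upt_pairs: "(\<Sum>(a,b)\<leftarrow>map (\<lambda>s. (p s, q s)) [0..<n]. h a b) = (\<Sum>s<n. h (p s) (q s))"
  by (simp add: interv_sum_list_conv_sum_set_nat comp_def atLeast0LessThan)

lemma tens_left_sum:
  "(\<Sum>(x,y,z)\<leftarrow>tens_left f L. h x y z) = (\<Sum>(a,d)\<leftarrow>L. \<Sum>(b,c)\<leftarrow>f a. h b c d)"
  by (induction L) (auto simp: tens_left_def split_def comp_def)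

lemma tens_right_sum:
  "(\<Sum>(x,y,z)\<leftarrow>tens_right g L. h x y z) = (\<Sum>(a,d)\<leftarrow>L. \<Sum>(b,c)\<leftarrow>g d. h a b c)"
  by (induction L) (auto simp: tens_right_def split_def comp_def)

lemma tens_mult_sum:
  "(\<Sum>(x,y)\<leftarrow>tens_mult L M. h x y) = (\<Sum>(a,b)\<leftarrow>L. \<Sum>(c,d)\<leftarrow>M. h (a*c) (b*d))"
  by (induction L) (auto simp: tens_mult_def split_def comp_def)

lemma tens_mult_single: "tens_mult L [(x,y)] = map (\<lambda>(a,b). (a*x, b*y)) L"
  by (induction L) (auto simp: tens_mult_def)

lemma tens_eq2_trans: "tens_eq2 s1 s2 L M \<Longrightarrow> tens_eq2 s1 s2 M N \<Longrightarrow> tens_eq2 s1 s2 L N"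
  unfolding tens_eq2_def by metis

lemma tens_eq2_sym: "tens_eq2 s1 s2 L M \<Longrightarrow> tens_eq2 s1 s2 M L"
  unfolding tens_eq2_def by metis

lemma tens_eq2_refl: "tens_eq2 s1 s2 L L"
  unfolding tens_eq2_def by metis

lemma algebra_vs: "algebra_over s \<Longrightarrow> vector_space s"
  unfolding algebra_over_def by blast

lemma alg_lin_left:
  assumes "algebra_over s" shows "Vector_Spaces.linear s s (\<lambda>x. x * y)"
  using assms unfolding algebra_over_def Vector_Spaces.linear_iff by (auto simp: distrib_right)

lemma alg_lin_right:
  assumes "algebra_over s" shows "Vector_Spaces.linear s s (\<lambda>y. x * y)"
  using assms unfolding algebra_over_def Vector_Spaces.linear_iff by (simp add: distrib_left) metis

lemma lin_comp_f:
  "Vector_Spaces.linear s1 s2 g \<Longrightarrow> Vector_Spaces.linear s2 (*) \<phi> \<Longrightarrow> Vector_Spaces.linear s1 (*) (\<lambda>x. \<phi> (g x))"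
  using Vector_Spaces.linear_compose[of s1 s2 g "(*)" \<phi>] by (simp add: comp_def)

lemma tens_mult_cong:
  fixes s1 :: "'f::field \<Rightarrow> 'a::ring_1 \<Rightarrow> 'a" and s2 :: "'f \<Rightarrow> 'b::ring_1 \<Rightarrow> 'b"
  assumes a1: "algebra_over s1" and a2: "algebra_over s2"
    and e1: "tens_eq2 s1 s2 L L'" and e2: "tens_eq2 s1 s2 M M'"
  shows "tens_eq2 s1 s2 (tens_mult L M) (tens_mult L' M')"
  unfolding tens_eq2_def
proof (intro allI impI)
  fix \<phi> \<psi> assume l: "Vector_Spaces.linear s1 (*) \<phi> \<and> Vector_Spaces.linear s2 (*) \<psi>"
  have v1: "vector_space s1" and v2: "vector_space s2" using a1 a2 by (auto simp: algebra_vs)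
  have inner: "(\<Sum>(c,d)\<leftarrow>M. \<phi> (a*c) * \<psi> (b*d)) = (\<Sum>(c,d)\<leftarrow>M'. \<phi> (a*c) * \<psi> (b*d))" for a b
    using e2 lin_comp_f[OF alg_lin_right[OF a1] conjunct1[OF l]] lin_comp_f[OF alg_lin_right[OF a2] conjunct2[OF l]]
    unfolding tens_eq2_def by blast
  have "(\<Sum>(x,y)\<leftarrow>tens_mult L M. \<phi> x * \<psi> y) = (\<Sum>(a,b)\<leftarrow>L. \<Sum>(c,d)\<leftarrow>M'. \<phi> (a*c) * \<psi> (b*d))"
    by (simp add: tens_mult_sum inner)
  also have "\<dots> = (\<Sum>(a,b)\<leftarrow>L'. \<Sum>(c,d)\<leftarrow>M'. \<phi> (a*c) * \<psi> (b*d))"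
  proof (rule bil[OF v1 v2 e1])
    fix b show "Vector_Spaces.linear s1 (*) (\<lambda>a. \<Sum>(c,d)\<leftarrow>M'. \<phi> (a*c) * \<psi> (b*d))"
      unfolding lin_f
    proof (intro conjI allI v1)
      fix x y show "(\<Sum>(c,d)\<leftarrow>M'. \<phi> ((x + y)*c) * \<psi> (b*d)) = (\<Sum>(c,d)\<leftarrow>M'. \<phi> (x*c) * \<psi> (b*d)) + (\<Sum>(c,d)\<leftarrow>M'. \<phi> (y*c) * \<psi> (b*d))"
        using l unfolding lin_f by (simp add: distrib_right sum_list_addf split_def)
    next
      fix k x
      have "s1 k x * c = s1 k (x * c)" for c using a1 unfolding algebra_over_def by metis
      then show "(\<Sum>(c,d)\<leftarrow>M'. \<phi> (s1 k x*c) * \<psi> (b*d)) = k * (\<Sum>(c,d)\<leftarrow>M'. \<phi> (x*c) * \<psi> (b*d))"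
        using l unfolding lin_f by (simp add: sum_list_const_mult split_def mult.assoc)
    qed
  next
    fix a show "Vector_Spaces.linear s2 (*) (\<lambda>b. \<Sum>(c,d)\<leftarrow>M'. \<phi> (a*c) * \<psi> (b*d))"
      unfolding lin_f
    proof (intro conjI allI v2)
      fix x y show "(\<Sum>(c,d)\<leftarrow>M'. \<phi> (a*c) * \<psi> ((x+y)*d)) = (\<Sum>(c,d)\<leftarrow>M'. \<phi> (a*c) * \<psi> (x*d)) + (\<Sum>(c,d)\<leftarrow>M'. \<phi> (a*c) * \<psi> (y*d))"
        using l unfolding lin_f by (simp add: distrib_right distrib_left sum_list_addf split_def)
    next
      fix k x
      have "s2 k x * c = s2 k (x * c)" for c using a2 unfolding algebra_over_def by metis
      then show "(\<Sum>(c,d)\<leftarrow>M'. \<phi> (a*c) * \<psi> (s2 k x*d)) = k * (\<Sum>(c,d)\<leftarrow>M'. \<phi> (a*c) * \<psi> (x*d))"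
        using l unfolding lin_f by (simp add: sum_list_const_mult split_def mult.assoc mult.left_commute)
    qed
  qed
  also have "\<dots> = (\<Sum>(x,y)\<leftarrow>tens_mult L' M'. \<phi> x * \<psi> y)"
    by (simp add: tens_mult_sum)
  finally show "(\<Sum>(x,y)\<leftarrow>tens_mult L M. \<phi> x * \<psi> y) = (\<Sum>(x,y)\<leftarrow>tens_mult L' M'. \<phi> x * \<psi> y)" .
qed


lemma sum_delta_f: "j < (n::nat) \<Longrightarrow> (\<Sum>t<n. f t * (if t = j then 1 else 0)) = (f j :: 'a::semiring_1)"
proof -
  assume j: "j < n"
  have "(\<Sum>t<n. f t * (if t = j then 1 else 0)) = (\<Sum>t<n. if t = j then f t else 0)"
    by (rule sum.cong) auto
  also have "\<dots> = f j" using j by (subst sum.delta) auto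
  finally show ?thesis .
qed

locale hc =
  fixes sF :: "'f::field \<Rightarrow> 'k::ring_1 \<Rightarrow> 'k"
    and \<Delta> :: "'k \<Rightarrow> ('k \<times> 'k) list" and \<epsilon> :: "'k \<Rightarrow> 'f" and S :: "'k \<Rightarrow> 'k"
    and sE :: "'f \<Rightarrow> 'e::ring_1 \<Rightarrow> 'e" and Egr :: "nat \<Rightarrow> 'e set"
    and \<rho> :: "'e \<Rightarrow> ('k \<times> 'e) list"
  assumes hopf: "hopf_algebra sF \<Delta> \<epsilon> S"
    and comod: "graded_comodule_algebra sF \<Delta> \<epsilon> sE Egr \<rho>"
    and aE: "algebra_over sE"
begin

lemma aK: "algebra_over sF" using hopf unfolding hopf_algebra_def by blast
lemma vK: "vector_space sF" using aK by (rule algebra_vs)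
lemma vE: "vector_space sE" using aE by (rule algebra_vs)
lemma D_add: "tens_eq2 sF sF (\<Delta> (x + y)) (\<Delta> x @ \<Delta> y)" using hopf unfolding hopf_algebra_def by blast
lemma D_sc: "tens_eq2 sF sF (\<Delta> (sF c x)) (map (\<lambda>(a,b). (sF c a, b)) (\<Delta> x))" using hopf unfolding hopf_algebra_def by blast
lemma eps_lin: "Vector_Spaces.linear sF (*) \<epsilon>" using hopf unfolding hopf_algebra_def by blast
lemma D_mult: "tens_eq2 sF sF (\<Delta> (x * y)) (tens_mult (\<Delta> x) (\<Delta> y))" using hopf unfolding hopf_algebra_def by blast
lemma D_one: "tens_eq2 sF sF (\<Delta> 1) [(1, 1)]" using hopf unfolding hopf_algebra_def by blast
lemma eps_mult: "\<epsilon> (x * y) = \<epsilon> x * \<epsilon> y" using hopf unfolding hopf_algebra_def by blast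
lemma eps_one: "\<epsilon> 1 = 1" using hopf unfolding hopf_algebra_def by blast
lemma S_lin: "Vector_Spaces.linear sF sF S" using hopf unfolding hopf_algebra_def by blast
lemma ant1: "(\<Sum>(a,b)\<leftarrow>\<Delta> x. S a * b) = sF (\<epsilon> x) 1" using hopf unfolding hopf_algebra_def by blast
lemma ant2: "(\<Sum>(a,b)\<leftarrow>\<Delta> x. a * S b) = sF (\<epsilon> x) 1" using hopf unfolding hopf_algebra_def by blast
lemma r_add: "tens_eq2 sF sE (\<rho> (x + y)) (\<rho> x @ \<rho> y)" using comod unfolding graded_comodule_algebra_def by blast
lemma r_sc: "tens_eq2 sF sE (\<rho> (sE c x)) (map (\<lambda>(a,b). (a, sE c b)) (\<rho> x))" using comod unfolding graded_comodule_algebra_def by blast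
lemma r_co: "tens_eq3 sF sF sE (tens_left \<Delta> (\<rho> x)) (tens_right \<rho> (\<rho> x))" using comod unfolding graded_comodule_algebra_def by blast
lemma r_counit: "(\<Sum>(a,b)\<leftarrow>\<rho> x. sE (\<epsilon> a) b) = x" using comod unfolding graded_comodule_algebra_def by blast
lemma r_mult: "tens_eq2 sF sE (\<rho> (x * y)) (tens_mult (\<rho> x) (\<rho> y))" using comod unfolding graded_comodule_algebra_def by blast

lemma ThD:
  assumes "Vector_Spaces.linear sF (*) \<phi>" "Vector_Spaces.linear sF (*) \<psi>"
  shows "Vector_Spaces.linear sF (*) (\<lambda>x. \<Sum>(a,b)\<leftarrow>\<Delta> x. \<phi> a * \<psi> b)"
  unfolding lin_f
proof (intro conjI allI vK)
  fix x y show "(\<Sum>(a,b)\<leftarrow>\<Delta> (x + y). \<phi> a * \<psi> b) = (\<Sum>(a,b)\<leftarrow>\<Delta> x. \<phi> a * \<psi> b) + (\<Sum>(a,b)\<leftarrow>\<Delta> y. \<phi> a * \<psi> b)"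
    using D_add[of x y] assms unfolding tens_eq2_def by simp
next
  fix c x
  have "(\<Sum>(a,b)\<leftarrow>\<Delta> (sF c x). \<phi> a * \<psi> b) = (\<Sum>(a,b)\<leftarrow>map (\<lambda>(a,b). (sF c a, b)) (\<Delta> x). \<phi> a * \<psi> b)"
    using D_sc[of c x] assms unfolding tens_eq2_def by blast
  also have "\<dots> = c * (\<Sum>(a,b)\<leftarrow>\<Delta> x. \<phi> a * \<psi> b)"
    using assms(1) unfolding lin_f by (simp add: sum_list_const_mult split_def comp_def mult.assoc)
  finally show "(\<Sum>(a,b)\<leftarrow>\<Delta> (sF c x). \<phi> a * \<psi> b) = c * (\<Sum>(a,b)\<leftarrow>\<Delta> x. \<phi> a * \<psi> b)" .
qed

lemma ThR:
  assumes "Vector_Spaces.linear sF (*) \<phi>" "Vector_Spaces.linear sE (*) \<psi>"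
  shows "Vector_Spaces.linear sE (*) (\<lambda>x. \<Sum>(a,b)\<leftarrow>\<rho> x. \<phi> a * \<psi> b)"
  unfolding lin_f
proof (intro conjI allI vE)
  fix x y show "(\<Sum>(a,b)\<leftarrow>\<rho> (x + y). \<phi> a * \<psi> b) = (\<Sum>(a,b)\<leftarrow>\<rho> x. \<phi> a * \<psi> b) + (\<Sum>(a,b)\<leftarrow>\<rho> y. \<phi> a * \<psi> b)"
    using r_add[of x y] assms unfolding tens_eq2_def by simp
next
  fix c x
  have "(\<Sum>(a,b)\<leftarrow>\<rho> (sE c x). \<phi> a * \<psi> b) = (\<Sum>(a,b)\<leftarrow>map (\<lambda>(a,b). (a, sE c b)) (\<rho> x). \<phi> a * \<psi> b)"
    using r_sc[of c x] assms unfolding tens_eq2_def by blast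
  also have "\<dots> = c * (\<Sum>(a,b)\<leftarrow>\<rho> x. \<phi> a * \<psi> b)"
    using assms(2) unfolding lin_f by (simp add: sum_list_const_mult split_def comp_def mult.left_commute)
  finally show "(\<Sum>(a,b)\<leftarrow>\<rho> (sE c x). \<phi> a * \<psi> b) = c * (\<Sum>(a,b)\<leftarrow>\<rho> x. \<phi> a * \<psi> b)" .
qed

lemma antL:
  assumes "tens_eq2 sF sF (\<Delta> x) (map (\<lambda>s. (P s, Q s)) [0..<n])"
  shows "(\<Sum>s<n. S (P s) * Q s) = sF (\<epsilon> x) 1"
proof -
  have "(\<Sum>(a,b)\<leftarrow>\<Delta> x. S a * b) = (\<Sum>(a,b)\<leftarrow>map (\<lambda>s. (P s, Q s)) [0..<n]. S a * b)"
  proof (rule bilv[OF vK vK vK assms])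
    fix b show "Vector_Spaces.linear sF sF (\<lambda>a. S a * b)"
      using Vector_Spaces.linear_compose[OF S_lin alg_lin_left[OF aK, of b]] by (simp add: comp_def)
  next
    fix a show "Vector_Spaces.linear sF sF ((*) (S a))" using alg_lin_right[OF aK] by simp
  qed
  then show ?thesis using ant1[of x] sum_upt_pairs[of "\<lambda>a b. S a * b" P Q n] by simp
qed

lemma antR:
  assumes "tens_eq2 sF sF (\<Delta> x) (map (\<lambda>s. (P s, Q s)) [0..<n])"
  shows "(\<Sum>s<n. P s * S (Q s)) = sF (\<epsilon> x) 1"
proof -
  have "(\<Sum>(a,b)\<leftarrow>\<Delta> x. a * S b) = (\<Sum>(a,b)\<leftarrow>map (\<lambda>s. (P s, Q s)) [0..<n]. a * S b)"
  proof (rule bilv[OF vK vK vK assms])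
    fix b show "Vector_Spaces.linear sF sF (\<lambda>a. a * S b)"
      using alg_lin_left[OF aK] by simp
  next
    fix a show "Vector_Spaces.linear sF sF (\<lambda>b. a * S b)"
      using Vector_Spaces.linear_compose[OF S_lin alg_lin_right[OF aK, of a]] by (simp add: comp_def)
  qed
  then show ?thesis using ant2[of x] sum_upt_pairs[of "\<lambda>a b. a * S b" P Q n] by simp
qed

lemma sF_delta: "sF (if i = j then 1 else 0) 1 = (if i = j then 1 else 0)"
proof -
  interpret vector_space sF by (rule vK)
  show ?thesis by simp
qed

end


context hc begin

lemma mc_delta:
  assumes ind: "module.independent sE (v ` {..<n})" and inj: "inj_on v {..<n}"
    and rv: "\<forall>i<n. tens_eq2 sF sE (\<rho> (v i)) (map (\<lambda>s. (X i s, v s)) [0..<n])"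
    and i: "i < n" and j: "j < n"
  shows "tens_eq2 sF sF (\<Delta> (X i j)) (map (\<lambda>s. (X i s, X s j)) [0..<n])"
  unfolding tens_eq2_def
proof (intro allI impI)
  fix \<phi> \<psi> assume l: "Vector_Spaces.linear sF (*) \<phi> \<and> Vector_Spaces.linear sF (*) \<psi>"
  obtain \<chi> where \<chi>: "Vector_Spaces.linear sE (*) \<chi>" "\<forall>t<n. \<chi> (v t) = (if t = j then 1 else 0)"
    using coord[OF vE ind inj j] by blast
  define \<Theta> where "\<Theta> k = (\<Sum>(a,b)\<leftarrow>\<Delta> k. \<phi> a * \<psi> b)" for k
  define \<Psi> where "\<Psi> w = (\<Sum>(a,b)\<leftarrow>\<rho> w. \<psi> a * \<chi> b)" for w
  have lT: "Vector_Spaces.linear sF (*) \<Theta>" unfolding \<Theta>_def using ThD l by blast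
  have lP: "Vector_Spaces.linear sE (*) \<Psi>" unfolding \<Psi>_def using ThR l \<chi>(1) by blast
  have co: "(\<Sum>(x,y,z)\<leftarrow>tens_left \<Delta> (\<rho> (v i)). \<phi> x * \<psi> y * \<chi> z) = (\<Sum>(x,y,z)\<leftarrow>tens_right \<rho> (\<rho> (v i)). \<phi> x * \<psi> y * \<chi> z)"
    using r_co[of "v i"] l \<chi>(1) unfolding tens_eq3_def by blast
  have "(\<Sum>(x,y,z)\<leftarrow>tens_left \<Delta> (\<rho> (v i)). \<phi> x * \<psi> y * \<chi> z) = (\<Sum>(a,d)\<leftarrow>\<rho> (v i). \<Theta> a * \<chi> d)"
    unfolding tens_left_sum \<Theta>_def by (simp add: split_def sum_list_mult_const)
  also have "\<dots> = (\<Sum>(a,d)\<leftarrow>map (\<lambda>s. (X i s, v s)) [0..<n]. \<Theta> a * \<chi> d)"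
    using rv i lT \<chi>(1) unfolding tens_eq2_def by blast
  also have "\<dots> = \<Theta> (X i j)"
    unfolding sum_upt_pairs using \<chi>(2) sum_delta_f[OF j, of "\<lambda>t. \<Theta> (X i t)"] by simp
  finally have L: "(\<Sum>(x,y,z)\<leftarrow>tens_left \<Delta> (\<rho> (v i)). \<phi> x * \<psi> y * \<chi> z) = \<Theta> (X i j)" .
  have "(\<Sum>(x,y,z)\<leftarrow>tens_right \<rho> (\<rho> (v i)). \<phi> x * \<psi> y * \<chi> z) = (\<Sum>(a,d)\<leftarrow>\<rho> (v i). \<phi> a * \<Psi> d)"
    unfolding tens_right_sum \<Psi>_def by (simp add: split_def sum_list_const_mult mult.assoc)
  also have "\<dots> = (\<Sum>(a,d)\<leftarrow>map (\<lambda>s. (X i s, v s)) [0..<n]. \<phi> a * \<Psi> d)"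
    using rv i lP l unfolding tens_eq2_def by blast
  also have "\<dots> = (\<Sum>s<n. \<phi> (X i s) * \<psi> (X s j))"
  proof -
    have "\<Psi> (v s) = \<psi> (X s j)" if s: "s < n" for s
    proof -
      have "\<Psi> (v s) = (\<Sum>(a,d)\<leftarrow>map (\<lambda>t. (X s t, v t)) [0..<n]. \<psi> a * \<chi> d)"
        unfolding \<Psi>_def using rv s l \<chi>(1) unfolding tens_eq2_def by blast
      also have "\<dots> = \<psi> (X s j)"
        unfolding sum_upt_pairs using \<chi>(2) sum_delta_f[OF j, of "\<lambda>t. \<psi> (X s t)"] by simp
      finally show ?thesis .
    qed
    then show ?thesis unfolding sum_upt_pairs by (intro sum.cong) auto
  qed
  finally have R: "(\<Sum>(x,y,z)\<leftarrow>tens_right \<rho> (\<rho> (v i)). \<phi> x * \<psi> y * \<chi> z) = (\<Sum>s<n. \<phi> (X i s) * \<psi> (X s j))" .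
  show "(\<Sum>(a,b)\<leftarrow>\<Delta> (X i j). \<phi> a * \<psi> b) = (\<Sum>(a,b)\<leftarrow>map (\<lambda>s. (X i s, X s j)) [0..<n]. \<phi> a * \<psi> b)"
    using L R co unfolding sum_upt_pairs \<Theta>_def by simp
qed

lemma mc_eps:
  assumes ind: "module.independent sE (v ` {..<n})" and inj: "inj_on v {..<n}"
    and rv: "\<forall>i<n. tens_eq2 sF sE (\<rho> (v i)) (map (\<lambda>s. (X i s, v s)) [0..<n])"
    and i: "i < n" and j: "j < n"
  shows "\<epsilon> (X i j) = (if i = j then 1 else 0)"
proof -
  obtain \<chi> where \<chi>: "Vector_Spaces.linear sE (*) \<chi>" "\<forall>t<n. \<chi> (v t) = (if t = j then 1 else 0)"
    using coord[OF vE ind inj j] by blast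
  have "\<chi> (v i) = \<chi> (\<Sum>(a,b)\<leftarrow>\<rho> (v i). sE (\<epsilon> a) b)" using r_counit by simp
  also have "\<dots> = (\<Sum>(a,b)\<leftarrow>\<rho> (v i). \<epsilon> a * \<chi> b)"
    using \<chi>(1) by (subst lin_sum_list[OF \<chi>(1)]) (simp add: comp_def split_def lin_f)
  also have "\<dots> = (\<Sum>(a,d)\<leftarrow>map (\<lambda>s. (X i s, v s)) [0..<n]. \<epsilon> a * \<chi> d)"
    using rv i eps_lin \<chi>(1) unfolding tens_eq2_def by blast
  also have "\<dots> = \<epsilon> (X i j)"
    unfolding sum_upt_pairs using \<chi>(2) sum_delta_f[OF j, of "\<lambda>t. \<epsilon> (X i t)"] by simp
  finally show ?thesis using \<chi>(2) i by simp
qed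

end


context hc begin

lemma unit_functional:
  assumes ne: "e \<noteq> 0"
  shows "\<exists>\<chi>. Vector_Spaces.linear sE (*) \<chi> \<and> \<chi> e = 1"
proof -
  interpret p: vector_space_pair sE "(*) :: 'f \<Rightarrow> 'f \<Rightarrow> 'f" using vsp[OF vE] .
  have "p.vs1.independent {e}" using ne by simp
  from p.linear_independent_extend[OF this, of "\<lambda>_. 1"] show ?thesis by auto
qed

lemma tens_mult_upt_sum:
  "(\<Sum>(x,y)\<leftarrow>tens_mult (map (\<lambda>s. (p s, q s)) [0..<n]) (map (\<lambda>t. (p' t, q' t)) [0..<m]). h x y)
   = (\<Sum>s<n. \<Sum>t<m. h (p s * p' t) (q s * q' t))"
  unfolding tens_mult_sum sum_upt_pairs by simp

lemma pair:
  assumes indv: "module.independent sE (v ` {..<n})" and injv: "inj_on v {..<n}"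
    and rv: "\<forall>i<n. tens_eq2 sF sE (\<rho> (v i)) (map (\<lambda>s. (X i s, v s)) [0..<n])"
    and rw: "\<forall>i<n. tens_eq2 sF sE (\<rho> (w i)) (map (\<lambda>s. (Z i s, w s)) [0..<n])"
    and prod: "\<forall>i<n. \<forall>j<n. v i * w j = (if i = j then e else 0)"
    and re: "tens_eq2 sF sE (\<rho> e) [(Dd, e)]" and ne: "e \<noteq> 0"
    and i: "i < n" and j: "j < n"
  shows "(\<Sum>s<n. X i s * Z j s) = (if i = j then Dd else 0)"
proof (rule sep[OF vK])
  fix \<phi> assume l: "Vector_Spaces.linear sF (*) \<phi>"
  interpret p: vector_space_pair sF "(*) :: 'f \<Rightarrow> 'f \<Rightarrow> 'f" using vsp[OF vK] .
  interpret q: vector_space_pair sE "(*) :: 'f \<Rightarrow> 'f \<Rightarrow> 'f" using vsp[OF vE] .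
  obtain \<chi> where \<chi>: "Vector_Spaces.linear sE (*) \<chi>" "\<chi> e = 1" using unit_functional[OF ne] by blast
  define \<Omega> where "\<Omega> x = (\<Sum>(a,b)\<leftarrow>\<rho> x. \<phi> a * \<chi> b)" for x
  have lO: "Vector_Spaces.linear sE (*) \<Omega>" unfolding \<Omega>_def using ThR l \<chi>(1) by blast
  have te: "tens_eq2 sF sE (\<rho> (v i * w j)) (tens_mult (map (\<lambda>s. (X i s, v s)) [0..<n]) (map (\<lambda>t. (Z j t, w t)) [0..<n]))"
    using tens_eq2_trans[OF r_mult tens_mult_cong[OF aK aE]] rv rw i j by blast
  have "\<Omega> (v i * w j) = (\<Sum>s<n. \<Sum>t<n. \<phi> (X i s * Z j t) * \<chi> (v s * w t))"
    using te l \<chi>(1) unfolding \<Omega>_def tens_eq2_def tens_mult_upt_sum by blast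
  also have "\<dots> = (\<Sum>s<n. \<Sum>t<n. \<phi> (X i s * Z j t) * (if t = s then 1 else 0))"
    using prod \<chi> q.linear_0[OF \<chi>(1)] by (intro sum.cong refl) auto
  also have "\<dots> = (\<Sum>s<n. \<phi> (X i s * Z j s))"
    by (intro sum.cong refl) (simp add: sum_delta_f)
  also have "\<dots> = \<phi> (\<Sum>s<n. X i s * Z j s)"
    using p.linear_sum[OF l] by metis
  finally have A: "\<Omega> (v i * w j) = \<phi> (\<Sum>s<n. X i s * Z j s)" .
  have B: "\<Omega> (v i * w j) = \<phi> (if i = j then Dd else 0)"
  proof (cases "i = j")
    case True
    then have "\<Omega> (v i * w j) = \<Omega> e" using prod i j by simp
    also have "\<dots> = \<phi> Dd" using re l \<chi> unfolding \<Omega>_def tens_eq2_def by auto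
    finally show ?thesis using True by simp
  next
    case False
    then show ?thesis using prod i j q.linear_0[OF lO] p.linear_0[OF l] by simp
  qed
  show "\<phi> (\<Sum>s<n. X i s * Z j s) = \<phi> (if i = j then Dd else 0)" using A B by simp
qed

end


lemma sum_diag_r: "j < (n::nat) \<Longrightarrow> (\<Sum>s<n. X s * (if s = j then d else 0)) = X j * (d::'a::semiring_1)"
proof -
  assume j: "j < n"
  have "(\<Sum>s<n. X s * (if s = j then d else 0)) = (\<Sum>s<n. if s = j then X s * d else 0)"
    by (rule sum.cong) auto
  also have "\<dots> = X j * d" using j by (subst sum.delta) auto
  finally show ?thesis .
qed

lemma sum_diag_l: "i < (n::nat) \<Longrightarrow> (\<Sum>s<n. (if i = s then d else 0) * X s) = d * (X i::'a::semiring_1)"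
proof -
  assume i: "i < n"
  have "(\<Sum>s<n. (if i = s then d else 0) * X s) = (\<Sum>s<n. if i = s then d * X s else 0)"
    by (rule sum.cong) auto
  also have "\<dots> = d * X i" using i by (subst sum.delta') auto
  finally show ?thesis .
qed

lemma triple_assoc:
  fixes A B C :: "nat \<Rightarrow> nat \<Rightarrow> 'a::semiring_0"
  shows "(\<Sum>s<n. A i s * (\<Sum>t<n. B s t * C t j)) = (\<Sum>t<n. (\<Sum>s<n. A i s * B s t) * C t j)"
  by (simp add: sum_distrib_left sum_distrib_right mult.assoc) (rule sum.swap)

lemma ring_lemma:
  fixes A B C :: "nat \<Rightarrow> nat \<Rightarrow> 'a::ring_1"
  assumes h1: "\<forall>i<n. \<forall>j<n. (\<Sum>s<n. A i s * B s j) = (if i = j then 1 else 0)"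
    and h2: "\<forall>i<n. \<forall>j<n. (\<Sum>s<n. B i s * C j s) = (if i = j then d else 0)"
    and i: "i < n" and j: "j < n"
  shows "A i j * d = C j i"
proof -
  have "(\<Sum>s<n. A i s * (\<Sum>t<n. B s t * (\<lambda>t j. C j t) t j)) = A i j * d"
  proof -
    have "(\<Sum>s<n. A i s * (\<Sum>t<n. B s t * (\<lambda>t j. C j t) t j)) = (\<Sum>s<n. A i s * (if s = j then d else 0))"
      using h2 j by (intro sum.cong refl) auto
    then show ?thesis by (subst (asm) sum_diag_r[OF j]) simp
  qed
  moreover have "(\<Sum>t<n. (\<Sum>s<n. A i s * B s t) * (\<lambda>t j. C j t) t j) = C j i"
  proof -
    have "(\<Sum>t<n. (\<Sum>s<n. A i s * B s t) * (\<lambda>t j. C j t) t j) = (\<Sum>t<n. (if i = t then 1 else 0) * C j t)"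
      using h1 i by (intro sum.cong refl) auto
    then show ?thesis by (subst (asm) sum_diag_l[OF i]) simp
  qed
  ultimately show ?thesis using triple_assoc[of A i B "\<lambda>t j. C j t" j n] by simp
qed

lemma inv_unique:
  fixes L M R :: "nat \<Rightarrow> nat \<Rightarrow> 'a::ring_1"
  assumes h1: "\<forall>i<n. \<forall>j<n. (\<Sum>s<n. L i s * M s j) = (if i = j then 1 else 0)"
    and h2: "\<forall>i<n. \<forall>j<n. (\<Sum>s<n. M i s * R s j) = (if i = j then 1 else 0)"
    and i: "i < n" and j: "j < n"
  shows "L i j = R i j"
proof -
  have "(\<Sum>s<n. L i s * (\<Sum>t<n. M s t * R t j)) = L i j"
  proof -
    have "(\<Sum>s<n. L i s * (\<Sum>t<n. M s t * R t j)) = (\<Sum>s<n. L i s * (if s = j then 1 else 0))"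
      using h2 j by (intro sum.cong refl) auto
    then show ?thesis by (subst (asm) sum_diag_r[OF j]) simp
  qed
  moreover have "(\<Sum>t<n. (\<Sum>s<n. L i s * M s t) * R t j) = R i j"
  proof -
    have "(\<Sum>t<n. (\<Sum>s<n. L i s * M s t) * R t j) = (\<Sum>t<n. (if i = t then 1 else 0) * R t j)"
      using h1 i by (intro sum.cong refl) auto
    then show ?thesis by (subst (asm) sum_diag_l[OF i]) simp
  qed
  ultimately show ?thesis using triple_assoc[of L i M R j n] by simp
qed

context hc begin

lemma SD_group:
  assumes dD: "tens_eq2 sF sF (\<Delta> Dd) [(Dd, Dd)]" and r: "Dd * S Dd = 1" and eD: "\<epsilon> Dd = 1"
    and l: "S Dd * Dd = 1"
  shows "tens_eq2 sF sF (\<Delta> (S Dd)) [(S Dd, S Dd)]" and "\<epsilon> (S Dd) = 1"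
proof -
  have t1: "tens_eq2 sF sF (\<Delta> (S Dd * Dd)) (tens_mult (\<Delta> (S Dd)) [(Dd, Dd)])"
    by (rule tens_eq2_trans[OF D_mult tens_mult_cong[OF aK aK tens_eq2_refl dD]])
  have t2: "tens_eq2 sF sF (tens_mult (\<Delta> (S Dd)) [(Dd, Dd)]) [(1,1)]"
    using tens_eq2_trans[OF tens_eq2_sym[OF t1]] D_one l by simp
  have t3: "tens_eq2 sF sF (tens_mult (tens_mult (\<Delta> (S Dd)) [(Dd, Dd)]) [(S Dd, S Dd)]) (tens_mult [(1,1)] [(S Dd, S Dd)])"
    by (rule tens_mult_cong[OF aK aK t2 tens_eq2_refl])
  have "tens_mult (tens_mult (\<Delta> (S Dd)) [(Dd, Dd)]) [(S Dd, S Dd)] = \<Delta> (S Dd)"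
    unfolding tens_mult_single map_map by (rule map_idI) (auto simp: mult.assoc r)
  moreover have "tens_mult [(1::'k,1::'k)] [(S Dd, S Dd)] = [(S Dd, S Dd)]"
    by (simp add: tens_mult_single)
  ultimately show "tens_eq2 sF sF (\<Delta> (S Dd)) [(S Dd, S Dd)]" using t3 by simp
  show "\<epsilon> (S Dd) = 1" using eps_mult[of "S Dd" Dd] eD l eps_one by simp
qed

lemma delta_times_group:
  assumes dx: "tens_eq2 sF sF (\<Delta> x) (map (\<lambda>s. (P s, Q s)) [0..<n])"
    and dg: "tens_eq2 sF sF (\<Delta> g) [(g, g)]"
  shows "tens_eq2 sF sF (\<Delta> (x * g)) (map (\<lambda>s. (P s * g, Q s * g)) [0..<n])"
proof -
  have "tens_eq2 sF sF (\<Delta> (x * g)) (tens_mult (map (\<lambda>s. (P s, Q s)) [0..<n]) [(g, g)])"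
    by (rule tens_eq2_trans[OF D_mult tens_mult_cong[OF aK aK dx dg]])
  then show ?thesis by (simp add: tens_mult_single comp_def)
qed

end


lemma rep:
  fixes s :: "'f::field \<Rightarrow> 'a::ab_group_add \<Rightarrow> 'a" and n :: nat
  assumes vs: "vector_space s"
    and chi: "\<forall>t<n. Vector_Spaces.linear s (*) (\<chi> t) \<and> (\<forall>u<n. \<chi> t (v u) = (if u = t then 1 else 0))"
    and x: "x \<in> module.span s (v ` {..<n})"
  shows "x = (\<Sum>t<n. s (\<chi> t x) (v t))"
proof -
  interpret p: vector_space_pair s "(*) :: 'f \<Rightarrow> 'f \<Rightarrow> 'f" using vsp[OF vs] .
  interpret q: vector_space_pair s s using vs unfolding vector_space_pair_def by blast
  define g where "g a = (\<Sum>t<n. s (\<chi> t a) (v t))" for a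
  have lg: "Vector_Spaces.linear s s g"
    unfolding Vector_Spaces.linear_iff
  proof (intro conjI allI vs)
    fix x y
    have "(\<Sum>t<n. s (\<chi> t (x + y)) (v t)) = (\<Sum>t<n. s (\<chi> t x) (v t) + s (\<chi> t y) (v t))"
    proof (intro sum.cong refl)
      fix t assume "t \<in> {..<n}"
      then have lt: "Vector_Spaces.linear s (*) (\<chi> t)" using chi by auto
      show "s (\<chi> t (x + y)) (v t) = s (\<chi> t x) (v t) + s (\<chi> t y) (v t)"
        using p.linear_add[OF lt, of x y] by (simp add: p.vs1.scale_left_distrib)
    qed
    then show "g (x + y) = g x + g y"
      unfolding g_def by (simp add: sum.distrib)
  next
    fix c x
    have "(\<Sum>t<n. s (\<chi> t (s c x)) (v t)) = (\<Sum>t<n. s c (s (\<chi> t x) (v t)))"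
    proof (intro sum.cong refl)
      fix t assume "t \<in> {..<n}"
      then have lt: "Vector_Spaces.linear s (*) (\<chi> t)" using chi by auto
      show "s (\<chi> t (s c x)) (v t) = s c (s (\<chi> t x) (v t))"
        using p.linear_scale[OF lt, of c x] by (simp add: p.vs1.scale_scale)
    qed
    then show "g (s c x) = s c (g x)"
      unfolding g_def by (simp add: p.vs1.scale_sum_right)
  qed
  have lid: "Vector_Spaces.linear s s id"
    unfolding Vector_Spaces.linear_iff using vs by simp
  have "id x = g x"
  proof (rule q.linear_eq_on[OF lid lg x])
    fix w assume "w \<in> v ` {..<n}"
    then obtain u where u: "u < n" "w = v u" by auto
    have "g w = (\<Sum>t<n. s (if u = t then 1 else 0) (v t))"
      unfolding g_def using chi u by (intro sum.cong refl) auto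
    also have "\<dots> = (\<Sum>t<n. if u = t then v t else 0)"
      by (rule sum.cong) auto
    also have "\<dots> = w" using u by (subst sum.delta') auto
    finally show "id w = g w" by simp
  qed
  then show ?thesis unfolding g_def by simp
qed

context hc begin
lemma ants:
  assumes d: "\<forall>i<n. \<forall>j<n. tens_eq2 sF sF (\<Delta> (X i j)) (map (\<lambda>s. (X i s, X s j)) [0..<n])"
    and e: "\<forall>i<n. \<forall>j<n. \<epsilon> (X i j) = (if i = j then 1 else 0)"
  shows "\<forall>i<n. \<forall>j<n. (\<Sum>s<n. X i s * S (X s j)) = (if i = j then 1 else 0)"
    and "\<forall>i<n. \<forall>j<n. (\<Sum>s<n. S (X i s) * X s j) = (if i = j then 1 else 0)"
proof (intro allI impI)
  fix i j assume ij: "i < n" "j < n"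
  show "(\<Sum>s<n. X i s * S (X s j)) = (if i = j then 1 else 0)"
    using antR[OF d[rule_format, OF ij]] e[rule_format, OF ij] sF_delta[of i j] by simp
next
  show "\<forall>i<n. \<forall>j<n. (\<Sum>s<n. S (X i s) * X s j) = (if i = j then 1 else 0)"
  proof (intro allI impI)
    fix i j assume ij: "i < n" "j < n"
    show "(\<Sum>s<n. S (X i s) * X s j) = (if i = j then 1 else 0)"
      using antL[OF d[rule_format, OF ij]] e[rule_format, OF ij] sF_delta[of i j] by simp
  qed
qed
end

lemma chi_sum:
  fixes s :: "'f::field \<Rightarrow> 'a::ab_group_add \<Rightarrow> 'a"
  assumes "Vector_Spaces.linear s (*) \<chi>"
  shows "\<chi> (\<Sum>t\<in>A. s (k t) (w t)) = (\<Sum>t\<in>A. k t * \<chi> (w t))"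
proof -
  interpret Vector_Spaces.linear s "(*)" \<chi> by fact
  show ?thesis by (simp add: sum scale)
qed

theorem lemma3p1:
  fixes sF :: "'f::field \<Rightarrow> 'k::ring_1 \<Rightarrow> 'k"
    and \<Delta> :: "'k \<Rightarrow> ('k \<times> 'k) list" and \<epsilon> :: "'k \<Rightarrow> 'f" and S :: "'k \<Rightarrow> 'k"
    and sE :: "'f \<Rightarrow> 'e::ring_1 \<Rightarrow> 'e" and Egr :: "nat \<Rightarrow> 'e set"
    and \<rho> :: "'e \<Rightarrow> ('k \<times> 'e) list"
    and l n :: nat and e :: 'e and a b c :: "nat \<Rightarrow> 'e"
    and \<alpha> :: "nat \<Rightarrow> nat \<Rightarrow> 'f"
    and Y F G :: "nat \<Rightarrow> nat \<Rightarrow> 'k" and D :: 'k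
  assumes hopf: "hopf_algebra sF \<Delta> \<epsilon> S"
    and conn: "connected_graded_algebra sE Egr"
    and frob: "graded_frobenius sE Egr"
    and top: "top_degree Egr l"
    and comod: "graded_comodule_algebra sF \<Delta> \<epsilon> sE Egr \<rho>"
    and e_basis: "is_basis_of sE (Egr l) (\<lambda>_. e) 1"
    and a_basis: "is_basis_of sE (Egr 1) a n"
    and b_basis: "is_basis_of sE (Egr (l - 1)) b n"
    and ab: "\<forall>i<n. \<forall>j<n. a i * b j = (if i = j then e else 0)"
    and c_basis: "is_basis_of sE (Egr 1) c n"
    and bc: "\<forall>i<n. \<forall>j<n. b i * c j = (if i = j then e else 0)"
    and c_alpha: "\<forall>i<n. c i = (\<Sum>j<n. sE (\<alpha> i j) (a j))"
    and rho_a: "\<forall>i<n. tens_eq2 sF sE (\<rho> (a i)) (map (\<lambda>s. (Y i s, a s)) [0..<n])"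
    and rho_b: "\<forall>i<n. tens_eq2 sF sE (\<rho> (b i)) (map (\<lambda>s. (F i s, b s)) [0..<n])"
    and rho_c: "\<forall>i<n. tens_eq2 sF sE (\<rho> (c i)) (map (\<lambda>s. (G i s, c s)) [0..<n])"
    and rho_e: "tens_eq2 sF sE (\<rho> e) [(D, e)]"
  shows
    \<comment> \<open>D is invertible with inverse S D\<close>
    "D * S D = 1 \<and> S D * D = 1
     \<comment> \<open>(a)\<close>
     \<and> mat_eq n (mat_mult n Y (mat_map S Y)) (diag_mat 1)
     \<and> mat_eq n (mat_mult n (mat_map S Y) Y) (diag_mat 1)
     \<comment> \<open>(b)\<close>
     \<and> mat_eq n (mat_mult n G (mat_map S G)) (diag_mat 1)
     \<and> mat_eq n (mat_mult n (mat_map S G) G) (diag_mat 1)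
     \<comment> \<open>(c)\<close>
     \<and> mat_eq n (mat_mult n Y (mat_transpose F)) (diag_mat D)
     \<and> mat_eq n (mat_map S Y) (mat_mult n (mat_transpose F) (diag_mat (S D)))
     \<comment> \<open>(d)\<close>
     \<and> mat_eq n (mat_mult n (mat_map S F) (mat_map S (mat_transpose Y))) (diag_mat (S D))
     \<comment> \<open>(e)\<close>
     \<and> mat_eq n (mat_mult n (mat_map S G) (mat_map S (mat_transpose F))) (diag_mat (S D))
     \<and> mat_eq n (mat_mult n (mat_map S (mat_transpose F)) (diag_mat D)) G
     \<comment> \<open>(f)\<close>
     \<and> mat_eq n (mat_map (S \<circ> S) Y) (mat_mult n (mat_mult n (diag_mat D) G) (diag_mat (S D)))
     \<comment> \<open>(g): alpha is invertible and G = alpha Y alpha^-1\<close>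
     \<and> (\<exists>\<beta>. mat_eq n (mat_mult n \<alpha> \<beta>) (diag_mat 1) \<and> mat_eq n (mat_mult n \<beta> \<alpha>) (diag_mat 1))
     \<and> (\<forall>\<beta>. mat_eq n (mat_mult n \<alpha> \<beta>) (diag_mat 1) \<and> mat_eq n (mat_mult n \<beta> \<alpha>) (diag_mat 1)
            \<longrightarrow> mat_eq n G (smat_mult_right sF n (smat_mult_left sF n \<alpha> Y) \<beta>))"
proof -
  have aE: "algebra_over sE" using conn unfolding connected_graded_algebra_def graded_algebra_def by blast
  interpret hc sF \<Delta> \<epsilon> S sE Egr \<rho> by unfold_locales (rule hopf comod aE)+
  interpret vsE: vector_space sE by (rule vE)
  interpret vsK: vector_space sF by (rule vK)
  have inda: "module.independent sE (a ` {..<n})" and inja: "inj_on a {..<n}"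
    and a_in: "\<forall>i<n. a i \<in> Egr 1" using a_basis unfolding is_basis_of_def by blast+
  have indb: "module.independent sE (b ` {..<n})" and injb: "inj_on b {..<n}"
    using b_basis unfolding is_basis_of_def by blast+
  have indc: "module.independent sE (c ` {..<n})" and injc: "inj_on c {..<n}"
    and spanc: "module.span sE (c ` {..<n}) = Egr 1" using c_basis unfolding is_basis_of_def by blast+
  have inde: "module.independent sE ((\<lambda>_::nat. e) ` {..<1})" using e_basis unfolding is_basis_of_def by blast
  then have ne: "e \<noteq> 0" by (simp add: lessThan_Suc)
  have inde': "module.independent sE ((\<lambda>_::nat. e) ` {..<Suc 0})" using inde by simp
  have rv0: "\<forall>i<Suc 0. tens_eq2 sF sE (\<rho> ((\<lambda>_::nat. e) i)) (map (\<lambda>s. ((\<lambda>_ _. D) i s, (\<lambda>_::nat. e) s)) [0..<Suc 0])"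
    using rho_e by simp
  have dD: "tens_eq2 sF sF (\<Delta> D) [(D, D)]"
    using mc_delta[OF inde' _ rv0, of 0 0] by (simp add: inj_on_def)
  have eD: "\<epsilon> D = 1"
    using mc_eps[OF inde' _ rv0, of 0 0] by (simp add: inj_on_def)
  have dD': "tens_eq2 sF sF (\<Delta> D) (map (\<lambda>s. ((\<lambda>_. D) s, (\<lambda>_. D) s)) [0..<Suc 0])" using dD by simp
  have SDD: "S D * D = 1" using antL[OF dD'] eD sF_delta[of 0 0] by simp
  have DSD: "D * S D = 1" using antR[OF dD'] eD sF_delta[of 0 0] by simp
  have dSD: "tens_eq2 sF sF (\<Delta> (S D)) [(S D, S D)]" and eSD: "\<epsilon> (S D) = 1"
    using SD_group[OF dD DSD eD SDD] by auto
  have dY: "\<forall>i<n. \<forall>j<n. tens_eq2 sF sF (\<Delta> (Y i j)) (map (\<lambda>s. (Y i s, Y s j)) [0..<n])"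
    using mc_delta[OF inda inja rho_a] by blast
  have eY: "\<forall>i<n. \<forall>j<n. \<epsilon> (Y i j) = (if i = j then 1 else 0)"
    using mc_eps[OF inda inja rho_a] by blast
  have dF: "\<forall>i<n. \<forall>j<n. tens_eq2 sF sF (\<Delta> (F i j)) (map (\<lambda>s. (F i s, F s j)) [0..<n])"
    using mc_delta[OF indb injb rho_b] by blast
  have eF: "\<forall>i<n. \<forall>j<n. \<epsilon> (F i j) = (if i = j then 1 else 0)"
    using mc_eps[OF indb injb rho_b] by blast
  have dG: "\<forall>i<n. \<forall>j<n. tens_eq2 sF sF (\<Delta> (G i j)) (map (\<lambda>s. (G i s, G s j)) [0..<n])"
    using mc_delta[OF indc injc rho_c] by blast
  have eG: "\<forall>i<n. \<forall>j<n. \<epsilon> (G i j) = (if i = j then 1 else 0)"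
    using mc_eps[OF indc injc rho_c] by blast
  have YSY: "\<forall>i<n. \<forall>j<n. (\<Sum>s<n. Y i s * S (Y s j)) = (if i = j then 1 else 0)"
    using ants(1)[OF dY eY] .
  have SYY: "\<forall>i<n. \<forall>j<n. (\<Sum>s<n. S (Y i s) * Y s j) = (if i = j then 1 else 0)"
    using ants(2)[OF dY eY] .
  have FSF: "\<forall>i<n. \<forall>j<n. (\<Sum>s<n. F i s * S (F s j)) = (if i = j then 1 else 0)"
    using ants(1)[OF dF eF] .
  have SFF: "\<forall>i<n. \<forall>j<n. (\<Sum>s<n. S (F i s) * F s j) = (if i = j then 1 else 0)"
    using ants(2)[OF dF eF] .
  have GSG: "\<forall>i<n. \<forall>j<n. (\<Sum>s<n. G i s * S (G s j)) = (if i = j then 1 else 0)"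
    using ants(1)[OF dG eG] .
  have SGG: "\<forall>i<n. \<forall>j<n. (\<Sum>s<n. S (G i s) * G s j) = (if i = j then 1 else 0)"
    using ants(2)[OF dG eG] .
  have YF: "\<forall>i<n. \<forall>j<n. (\<Sum>s<n. Y i s * F j s) = (if i = j then D else 0)"
    using pair[OF inda inja rho_a rho_b ab rho_e ne] by blast
  have FG: "\<forall>i<n. \<forall>j<n. (\<Sum>s<n. F i s * G j s) = (if i = j then D else 0)"
    using pair[OF indb injb rho_b rho_c bc rho_e ne] by blast
  have SY: "\<forall>i<n. \<forall>j<n. S (Y i j) = F j i * S D"
  proof (intro allI impI)
    fix i j assume ij: "i < n" "j < n"
    have "S (Y i j) * D = F j i"
      using ring_lemma[of n "\<lambda>i s. S (Y i s)" Y F D i j] SYY YF ij by blast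
    then have "S (Y i j) * D * S D = F j i * S D" by simp
    then show "S (Y i j) = F j i * S D" by (simp add: mult.assoc DSD)
  qed
  have SF: "\<forall>i<n. \<forall>j<n. S (F i j) = G j i * S D"
  proof (intro allI impI)
    fix i j assume ij: "i < n" "j < n"
    have "S (F i j) * D = G j i"
      using ring_lemma[of n "\<lambda>i s. S (F i s)" F G D i j] SFF FG ij by blast
    then have "S (F i j) * D * S D = G j i * S D" by simp
    then show "S (F i j) = G j i * S D" by (simp add: mult.assoc DSD)
  qed
  have SF2: "\<forall>i<n. \<forall>j<n. S (F i j) * D = G j i"
    using SF by (simp add: mult.assoc SDD)
  define V where "V i j = F i j * S D" for i j
  have dV: "\<forall>i<n. \<forall>j<n. tens_eq2 sF sF (\<Delta> (V i j)) (map (\<lambda>s. (V i s, V s j)) [0..<n])"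
    unfolding V_def
  proof (intro allI impI)
    fix i j assume ij: "i < n" "j < n"
    show "tens_eq2 sF sF (\<Delta> (F i j * S D)) (map (\<lambda>s. (F i s * S D, F s j * S D)) [0..<n])"
      using delta_times_group[OF dF[rule_format, OF ij] dSD] .
  qed
  have eV: "\<forall>i<n. \<forall>j<n. \<epsilon> (V i j) = (if i = j then 1 else 0)"
    unfolding V_def using eps_mult eF eSD by simp
  have SVV: "\<forall>i<n. \<forall>j<n. (\<Sum>s<n. S (V i s) * V s j) = (if i = j then 1 else 0)"
    using ants(2)[OF dV eV] .
  have VR: "\<forall>i<n. \<forall>j<n. (\<Sum>s<n. V i s * (D * S (F s j))) = (if i = j then 1 else 0)"
  proof (intro allI impI)
    fix i j assume ij: "i < n" "j < n"
    have "(\<Sum>s<n. V i s * (D * S (F s j))) = (\<Sum>s<n. F i s * S (F s j))"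
      unfolding V_def by (intro sum.cong refl) (simp add: mult.assoc flip: mult.assoc[of "S D" D] add: SDD)
    then show "(\<Sum>s<n. V i s * (D * S (F s j))) = (if i = j then 1 else 0)" using FSF ij by simp
  qed
  have SV: "\<forall>i<n. \<forall>j<n. S (V i j) = D * S (F i j)"
    using inv_unique[of n "\<lambda>i s. S (V i s)" V "\<lambda>s j. D * S (F s j)"] SVV VR by blast
  have "\<forall>t. \<exists>\<chi>. t < n \<longrightarrow> (Vector_Spaces.linear sE (*) \<chi> \<and> (\<forall>u<n. \<chi> (c u) = (if u = t then 1 else 0)))"
    using coord[OF vE indc injc] by blast
  from choice[OF this] obtain \<chi>c where \<chi>c: "\<forall>t. t < n \<longrightarrow> (Vector_Spaces.linear sE (*) (\<chi>c t) \<and> (\<forall>u<n. \<chi>c t (c u) = (if u = t then 1 else 0)))"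
    by blast
  have "\<forall>t. \<exists>\<chi>. t < n \<longrightarrow> (Vector_Spaces.linear sE (*) \<chi> \<and> (\<forall>u<n. \<chi> (a u) = (if u = t then 1 else 0)))"
    using coord[OF vE inda inja] by blast
  from choice[OF this] obtain \<chi>a where \<chi>a: "\<forall>t. t < n \<longrightarrow> (Vector_Spaces.linear sE (*) (\<chi>a t) \<and> (\<forall>u<n. \<chi>a t (a u) = (if u = t then 1 else 0)))"
    by blast
  define \<beta> where "\<beta> s t = \<chi>c t (a s)" for s t
  have a_rep: "\<forall>s<n. a s = (\<Sum>t<n. sE (\<beta> s t) (c t))"
    unfolding \<beta>_def using rep[OF vE, of n \<chi>c c] \<chi>c a_in spanc by blast
  have ab1: "\<forall>i<n. \<forall>k<n. (\<Sum>j<n. \<alpha> i j * \<beta> j k) = (if i = k then 1 else 0)"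
  proof (intro allI impI)
    fix i k assume ik: "i < n" "k < n"
    have lk: "Vector_Spaces.linear sE (*) (\<chi>c k)" using \<chi>c ik by blast
    have e1: "\<chi>c k (c i) = (if i = k then 1 else 0)" using \<chi>c ik by blast
    have "\<chi>c k (c i) = (\<Sum>j<n. \<alpha> i j * \<chi>c k (a j))"
      using c_alpha ik chi_sum[OF lk] by simp
    then show "(\<Sum>j<n. \<alpha> i j * \<beta> j k) = (if i = k then 1 else 0)"
      unfolding \<beta>_def using e1 by simp
  qed
  have ab2: "\<forall>s<n. \<forall>k<n. (\<Sum>t<n. \<beta> s t * \<alpha> t k) = (if s = k then 1 else 0)"
  proof (intro allI impI)
    fix s k assume sk: "s < n" "k < n"
    have ct: "\<chi>a k (c t) = \<alpha> t k" if t: "t < n" for t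
    proof -
      have lk: "Vector_Spaces.linear sE (*) (\<chi>a k)" using \<chi>a sk by blast
      have "\<chi>a k (c t) = (\<Sum>j<n. \<alpha> t j * \<chi>a k (a j))"
        using c_alpha t chi_sum[OF lk] by simp
      also have "\<dots> = (\<Sum>j<n. \<alpha> t j * (if j = k then 1 else 0))"
        using \<chi>a sk by (intro sum.cong refl) auto
      also have "\<dots> = \<alpha> t k" by (rule sum_delta_f[OF sk(2)])
      finally show ?thesis .
    qed
    have lk: "Vector_Spaces.linear sE (*) (\<chi>a k)" using \<chi>a sk by blast
    have e1: "\<chi>a k (a s) = (if s = k then 1 else 0)" using \<chi>a sk by blast
    have "\<chi>a k (a s) = \<chi>a k (\<Sum>t<n. sE (\<beta> s t) (c t))" using a_rep sk by simp
    also have "\<dots> = (\<Sum>t<n. \<beta> s t * \<chi>a k (c t))"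
      by (rule chi_sum[OF lk])
    also have "\<dots> = (\<Sum>t<n. \<beta> s t * \<alpha> t k)" using ct by simp
    finally show "(\<Sum>t<n. \<beta> s t * \<alpha> t k) = (if s = k then 1 else 0)"
      using e1 by simp
  qed
  have Gform: "\<forall>i<n. \<forall>k<n. G i k = (\<Sum>j<n. \<Sum>s<n. sF (\<alpha> i j * \<beta> s k) (Y j s))"
  proof (intro allI impI)
    fix i k assume ik: "i < n" "k < n"
    show "G i k = (\<Sum>j<n. \<Sum>s<n. sF (\<alpha> i j * \<beta> s k) (Y j s))"
    proof (rule sep[OF vK])
      fix \<phi> assume l: "Vector_Spaces.linear sF (*) \<phi>"
      have lk: "Vector_Spaces.linear sE (*) (\<chi>c k)" using \<chi>c ik by blast
      define \<Theta> where "\<Theta> x = (\<Sum>(p,q)\<leftarrow>\<rho> x. \<phi> p * \<chi>c k q)" for x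
      have lT: "Vector_Spaces.linear sE (*) \<Theta>" unfolding \<Theta>_def using ThR l lk by blast
      have "\<Theta> (c i) = (\<Sum>t<n. \<phi> (G i t) * \<chi>c k (c t))"
        using rho_c ik l lk unfolding \<Theta>_def tens_eq2_def sum_upt_pairs by blast
      also have "\<dots> = \<phi> (G i k)"
        using \<chi>c ik sum_delta_f[OF ik(2), of "\<lambda>t. \<phi> (G i t)"] by simp
      finally have A: "\<Theta> (c i) = \<phi> (G i k)" .
      have Ta: "\<Theta> (a j) = (\<Sum>s<n. \<phi> (Y j s) * \<beta> s k)" if j: "j < n" for j
        using rho_a j l lk unfolding \<Theta>_def tens_eq2_def sum_upt_pairs \<beta>_def by blast
      have "\<Theta> (c i) = (\<Sum>j<n. \<alpha> i j * \<Theta> (a j))"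
        using c_alpha ik chi_sum[OF lT] by simp
      also have "\<dots> = (\<Sum>j<n. \<Sum>s<n. (\<alpha> i j * \<beta> s k) * \<phi> (Y j s))"
        using Ta by (simp add: sum_distrib_left mult_ac)
      also have "\<dots> = \<phi> (\<Sum>j<n. \<Sum>s<n. sF (\<alpha> i j * \<beta> s k) (Y j s))"
      proof -
        interpret lp: Vector_Spaces.linear sF "(*)" \<phi> by (rule l)
        show ?thesis by (simp add: lp.sum lp.scale)
      qed
      finally show "\<phi> (G i k) = \<phi> (\<Sum>j<n. \<Sum>s<n. sF (\<alpha> i j * \<beta> s k) (Y j s))" using A by simp
    qed
  qed
  show ?thesis
    unfolding mat_eq_def mat_mult_def mat_map_def mat_transpose_def
  proof (intro conjI)
    show "D * S D = 1" by (rule DSD)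
    show "S D * D = 1" by (rule SDD)
    show "\<forall>i<n. \<forall>j<n. (\<Sum>s<n. Y i s * S (Y s j)) = diag_mat 1 i j"
      using YSY unfolding diag_mat_def by simp
    show "\<forall>i<n. \<forall>j<n. (\<Sum>s<n. S (Y i s) * Y s j) = diag_mat 1 i j"
      using SYY unfolding diag_mat_def by simp
    show "\<forall>i<n. \<forall>j<n. (\<Sum>s<n. G i s * S (G s j)) = diag_mat 1 i j"
      using GSG unfolding diag_mat_def by simp
    show "\<forall>i<n. \<forall>j<n. (\<Sum>s<n. S (G i s) * G s j) = diag_mat 1 i j"
      using SGG unfolding diag_mat_def by simp
    show "\<forall>i<n. \<forall>j<n. (\<Sum>s<n. Y i s * F j s) = diag_mat D i j"
      using YF unfolding diag_mat_def by simp
    show "\<forall>i<n. \<forall>j<n. S (Y i j) = (\<Sum>s<n. F s i * diag_mat (S D) s j)"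
      using SY unfolding diag_mat_def by (simp add: sum_diag_r)
    show "\<forall>i<n. \<forall>j<n. (\<Sum>s<n. S (F i s) * S (Y j s)) = diag_mat (S D) i j"
    proof (intro allI impI)
      fix i j assume ij: "i < n" "j < n"
      have "(\<Sum>s<n. S (F i s) * S (Y j s)) = (\<Sum>s<n. S (F i s) * F s j) * S D"
        using SY ij by (simp add: sum_distrib_right mult.assoc)
      then show "(\<Sum>s<n. S (F i s) * S (Y j s)) = diag_mat (S D) i j"
        using SFF ij unfolding diag_mat_def by simp
    qed
    show "\<forall>i<n. \<forall>j<n. (\<Sum>s<n. S (G i s) * S (F j s)) = diag_mat (S D) i j"
    proof (intro allI impI)
      fix i j assume ij: "i < n" "j < n"
      have "(\<Sum>s<n. S (G i s) * S (F j s)) = (\<Sum>s<n. S (G i s) * G s j) * S D"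
        using SF ij by (simp add: sum_distrib_right mult.assoc)
      then show "(\<Sum>s<n. S (G i s) * S (F j s)) = diag_mat (S D) i j"
        using SGG ij unfolding diag_mat_def by simp
    qed
    show "\<forall>i<n. \<forall>j<n. (\<Sum>s<n. S (F s i) * diag_mat D s j) = G i j"
      using SF2 unfolding diag_mat_def by (simp add: sum_diag_r)
    show "\<forall>i<n. \<forall>j<n. (S \<circ> S) (Y i j) = (\<Sum>s<n. (\<Sum>t<n. diag_mat D i t * G t s) * diag_mat (S D) s j)"
    proof (intro allI impI)
      fix i j assume ij: "i < n" "j < n"
      have "(S \<circ> S) (Y i j) = S (V j i)" using SY ij unfolding V_def by simp
      also have "\<dots> = D * (G i j * S D)" using SV SF ij by simp
      also have "\<dots> = (\<Sum>s<n. (\<Sum>t<n. diag_mat D i t * G t s) * diag_mat (S D) s j)"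
      proof -
        have "(\<Sum>s<n. (\<Sum>t<n. diag_mat D i t * G t s) * diag_mat (S D) s j)
            = (\<Sum>s<n. (D * G i s) * (if s = j then S D else 0))"
          unfolding diag_mat_def using ij by (intro sum.cong refl) (simp add: sum_diag_l)
        also have "\<dots> = D * G i j * S D" by (rule sum_diag_r[OF ij(2)])
        finally show ?thesis by (simp add: mult.assoc)
      qed
      finally show "(S \<circ> S) (Y i j) = (\<Sum>s<n. (\<Sum>t<n. diag_mat D i t * G t s) * diag_mat (S D) s j)" .
    qed
    show "\<exists>\<beta>. (\<forall>i<n. \<forall>j<n. (\<Sum>s<n. \<alpha> i s * \<beta> s j) = diag_mat 1 i j) \<and>
              (\<forall>i<n. \<forall>j<n. (\<Sum>s<n. \<beta> i s * \<alpha> s j) = diag_mat 1 i j)"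
      using ab1 ab2 unfolding diag_mat_def by blast
    show "\<forall>\<beta>'. (\<forall>i<n. \<forall>j<n. (\<Sum>s<n. \<alpha> i s * \<beta>' s j) = diag_mat 1 i j) \<and>
              (\<forall>i<n. \<forall>j<n. (\<Sum>s<n. \<beta>' i s * \<alpha> s j) = diag_mat 1 i j) \<longrightarrow>
              (\<forall>i<n. \<forall>j<n. G i j = smat_mult_right sF n (smat_mult_left sF n \<alpha> Y) \<beta>' i j)"
    proof (intro allI impI)
      fix \<beta>' i k
      assume h: "(\<forall>i<n. \<forall>j<n. (\<Sum>s<n. \<alpha> i s * \<beta>' s j) = diag_mat 1 i j) \<and>
              (\<forall>i<n. \<forall>j<n. (\<Sum>s<n. \<beta>' i s * \<alpha> s j) = diag_mat 1 i j)"
        and ik: "i < n" "k < n"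
      have bb: "\<beta>' s t = \<beta> s t" if "s < n" "t < n" for s t
        using inv_unique[of n \<beta>' \<alpha> \<beta> s t] h ab1 that unfolding diag_mat_def by blast
      have "smat_mult_right sF n (smat_mult_left sF n \<alpha> Y) \<beta>' i k
          = (\<Sum>s<n. \<Sum>t<n. sF (\<beta>' s k * \<alpha> i t) (Y t s))"
        unfolding smat_mult_right_def smat_mult_left_def by (simp add: vsK.scale_sum_right)
      also have "\<dots> = (\<Sum>s<n. \<Sum>t<n. sF (\<alpha> i t * \<beta> s k) (Y t s))"
        using bb ik by (intro sum.cong refl) (simp add: mult.commute)
      also have "\<dots> = (\<Sum>t<n. \<Sum>s<n. sF (\<alpha> i t * \<beta> s k) (Y t s))"
        by (rule sum.swap)
      also have "\<dots> = G i k" using Gform ik by simp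
      finally show "G i k = smat_mult_right sF n (smat_mult_left sF n \<alpha> Y) \<beta>' i k" by simp
    qed
  qed
qed

end
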